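(* For every deterministic algorithm which, given a set $P$ of $n$ elements, an upper bound $w$ on the width, and access to a query oracle for a poset $(P,\succ)$ of width at most $w$, outputs the set of minimal elements, there is a poset of width at most $w$ on $P$ (equivalently, an adversary answering queries consistently with some such poset) for which the algorithm makes at least $\frac{w+1}{2}n-w$ queries.
   Context: A poset $(P,\succ)$ consists of a set $P$ and an irreflexive, transitive relation $\succ$. Elements $a,b$ are incomparable if neither $a\succ b$ nor $b\succ a$; the width is the maximum size of a set of mutually incomparable elements. An element $a$ is minimal if there is no $b$ with $a\succ b$. A query oracle answers a query on $(x,y)$ by reporting whether $x\succ y$, $y\succ x$, or they are incomparable. *)

theory Defs
  imports Complex_Main
begin

text \<open>A strict poset on a carrier P: R x y means x \<succ> y. The relation lives on P only.\<close>
definition poset_on :: "'a set \<Rightarrow> ('a \<Rightarrow> 'a \<Rightarrow> bool) \<Rightarrow> bool" where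
  "poset_on P R \<longleftrightarrow> (\<forall>x y. R x y \<longrightarrow> x \<in> P \<and> y \<in> P)
     \<and> (\<forall>x\<in>P. \<not> R x x)
     \<and> (\<forall>x y z. R x y \<longrightarrow> R y z \<longrightarrow> R x z)"

definition incomparable :: "('a \<Rightarrow> 'a \<Rightarrow> bool) \<Rightarrow> 'a \<Rightarrow> 'a \<Rightarrow> bool" where
  "incomparable R x y \<longleftrightarrow> \<not> R x y \<and> \<not> R y x"

definition antichain_in :: "'a set \<Rightarrow> ('a \<Rightarrow> 'a \<Rightarrow> bool) \<Rightarrow> 'a set \<Rightarrow> bool" where
  "antichain_in P R A \<longleftrightarrow> A \<subseteq> P \<and> (\<forall>x\<in>A. \<forall>y\<in>A. x \<noteq> y \<longrightarrow> incomparable R x y)"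

definition width :: "'a set \<Rightarrow> ('a \<Rightarrow> 'a \<Rightarrow> bool) \<Rightarrow> nat" where
  "width P R = Max {card A | A. antichain_in P R A}"

definition minimal_elements :: "'a set \<Rightarrow> ('a \<Rightarrow> 'a \<Rightarrow> bool) \<Rightarrow> 'a set" where
  "minimal_elements P R = {a \<in> P. \<not> (\<exists>b. R a b)}"

datatype answer = Gt | Lt | Inc

definition answer_of :: "('a \<Rightarrow> 'a \<Rightarrow> bool) \<Rightarrow> 'a \<Rightarrow> 'a \<Rightarrow> answer" where
  "answer_of R x y = (if R x y then Gt else if R y x then Lt else Inc)"

text \<open>A deterministic query algorithm (for fixed P and w) as a decision tree:
  either output a set, or query a pair and continue depending on the answer.\<close>
datatype 'a qtree = Output "'a set" | Query 'a 'a "answer \<Rightarrow> 'a qtree"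

primrec run :: "'a qtree \<Rightarrow> ('a \<Rightarrow> 'a \<Rightarrow> bool) \<Rightarrow> 'a set \<times> nat" where
  "run (Output S) R = (S, 0)"
| "run (Query x y k) R = (let r = run (k (answer_of R x y)) R in (fst r, Suc (snd r)))"

end

theory Submission
  imports Defs
begin

record 'a st = nb :: "'a \<Rightarrow> 'a set" cl :: "'a \<Rightarrow> nat option" sp :: "'a \<Rightarrow> nat" tm :: nat up :: "'a set"

definition used :: "'a st \<Rightarrow> nat set" where "used s = {c. \<exists>v. cl s v = Some c}"

definition newc :: "nat \<Rightarrow> 'a st \<Rightarrow> 'a \<Rightarrow> nat" where
  "newc w s z = (if \<exists>c<w. c \<notin> used s then SOME c. c<w \<and> c \<notin> used s
                 else SOME c. c<w \<and> (\<forall>v\<in>nb s z. cl s v \<noteq> Some c))"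

definition mat :: "'a set \<Rightarrow> nat \<Rightarrow> 'a \<Rightarrow> 'a st \<Rightarrow> 'a st" where
  "mat P w z s = (if z \<in> P \<and> cl s z = None \<and> w - 1 \<le> card (nb s z)
     then s\<lparr>cl := (cl s)(z := Some (newc w s z)), sp := (sp s)(z := tm s), tm := Suc (tm s)\<rparr> else s)"

definition step :: "'a set \<Rightarrow> nat \<Rightarrow> 'a st \<Rightarrow> 'a \<Rightarrow> 'a \<Rightarrow> answer \<times> 'a st" where
  "step P w s x y = (if x = y \<or> x \<notin> P \<or> y \<notin> P then (Inc, s) else
     (let s1 = mat P w y (mat P w x s) in
      if cl s1 x \<noteq> None \<and> cl s1 y \<noteq> None then
        (if cl s1 x = cl s1 y then
           (if sp s1 y < sp s1 x then (Gt, s1\<lparr>up := insert x (up s1)\<rparr>)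
            else (Lt, s1\<lparr>up := insert y (up s1)\<rparr>))
         else (Inc, s1))
      else (Inc, s1\<lparr>nb := (nb s1)(x := insert y (nb s1 x), y := insert x (nb s1 y))\<rparr>)))"

primrec adv :: "'a set \<Rightarrow> nat \<Rightarrow> 'a qtree \<Rightarrow> 'a st \<Rightarrow> 'a set \<times> ('a \<times> 'a \<times> answer) list \<times> 'a st" where
  "adv P w (Output S) s = (S, [], s)"
| "adv P w (Query x y k) s = (let as = step P w s x y; r = adv P w (k (fst as)) (snd as)
      in (fst r, (x, y, fst as) # fst (snd r), snd (snd r)))"

lemma run_adv:
  assumes "adv P w T s = (o', h, sf)" and "\<forall>(x,y,a)\<in>set h. answer_of R x y = a"
  shows "run T R = (o', length h)"
  using assms
proof (induction T arbitrary: s h)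
  case (Output S) then show ?case by simp
next
  case (Query x y k)
  obtain a s' where as: "step P w s x y = (a, s')" by fastforce
  obtain o2 h2 sf2 where r: "adv P w (k a) s' = (o2, h2, sf2)" by (metis prod_cases3)
  from Query.prems as r have h: "h = (x,y,a) # h2" and o: "o' = o2" and sf: "sf = sf2" by auto
  from Query.prems(2) h have ans: "answer_of R x y = a" by auto
  from Query.prems(2) h have "\<forall>(x,y,a)\<in>set h2. answer_of R x y = a" by auto
  with Query.IH[of "k a" s' h2] r o sf have "run (k a) R = (o', length h2)"
    by auto
  then show ?case using ans h by simp
qed


definition chainrel :: "'a set \<Rightarrow> ('a \<Rightarrow> nat) \<Rightarrow> ('a \<Rightarrow> nat) \<Rightarrow> 'a \<Rightarrow> 'a \<Rightarrow> bool" where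
  "chainrel P f key u v \<longleftrightarrow> u \<in> P \<and> v \<in> P \<and> f u = f v \<and> key v < key u"

lemma chainrel_poset: "poset_on P (chainrel P f key)"
  unfolding poset_on_def chainrel_def by auto

lemma width_le:
  assumes "finite P" "\<And>A. antichain_in P R A \<Longrightarrow> card A \<le> w"
  shows "width P R \<le> w"
proof -
  have fin: "finite {card A | A. antichain_in P R A}"
  proof (rule finite_subset[of _ "{0..card P}"])
    show "{card A | A. antichain_in P R A} \<subseteq> {0..card P}"
      using assms(1) by (auto simp: antichain_in_def intro: card_mono)
  qed simp
  have ne: "{card A | A. antichain_in P R A} \<noteq> {}"
    by (rule ccontr) (auto simp: antichain_in_def)
  show ?thesis unfolding width_def using fin ne assms(2) by (subst Max_le_iff) auto
qed

lemma card_le_width: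
  assumes "finite P" "antichain_in P R A"
  shows "card A \<le> width P R"
proof -
  have fin: "finite {card A | A. antichain_in P R A}"
  proof (rule finite_subset[of _ "{0..card P}"])
    show "{card A | A. antichain_in P R A} \<subseteq> {0..card P}"
      using assms(1) by (auto simp: antichain_in_def intro: card_mono)
  qed simp
  show ?thesis unfolding width_def using fin assms(2) by (intro Max_ge) auto
qed

lemma chain_width:
  assumes "finite P" "inj_on key P" "\<forall>v\<in>P. f v < w"
  shows "width P (chainrel P f key) \<le> w"
proof (rule width_le[OF assms(1)])
  fix A assume A: "antichain_in P (chainrel P f key) A"
  have "inj_on f A"
  proof (rule inj_onI)
    fix u v assume "u \<in> A" "v \<in> A" "f u = f v"
    with A assms(2) show "u = v"
      unfolding antichain_in_def incomparable_def chainrel_def inj_on_def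
      by (metis linorder_neqE_nat subsetD)
  qed
  moreover have "f ` A \<subseteq> {..<w}" using A assms(3) by (auto simp: antichain_in_def)
  ultimately have "card A \<le> card {..<w}"
    by (metis card_image card_mono finite_lessThan)
  then show "card A \<le> w" by simp
qed

lemma min_card_le:
  assumes "finite P" "width P R \<le> w"
  shows "card (minimal_elements P R) \<le> w"
proof -
  have "antichain_in P R (minimal_elements P R)"
    unfolding antichain_in_def minimal_elements_def incomparable_def by auto
  from card_le_width[OF assms(1) this] assms(2) show ?thesis by simp
qed


definition Inv :: "'a set \<Rightarrow> nat \<Rightarrow> 'a st \<Rightarrow> bool" where
  "Inv P w s \<longleftrightarrow>
    (\<forall>v. nb s v \<subseteq> P - {v}) \<and>
    (\<forall>u v. u \<in> nb s v \<longrightarrow> v \<in> nb s u) \<and>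
    (\<forall>v c. cl s v = Some c \<longrightarrow> c < w \<and> v \<in> P \<and> w - 1 \<le> card (nb s v) \<and> sp s v < tm s) \<and>
    (\<forall>v\<in>P. cl s v = None \<longrightarrow> card (nb s v) \<le> w - 1) \<and>
    (\<forall>u v c. u \<in> nb s v \<longrightarrow> cl s v = Some c \<longrightarrow> cl s u \<noteq> Some c) \<and>
    (\<forall>u v. cl s u \<noteq> None \<longrightarrow> cl s v \<noteq> None \<longrightarrow> u \<noteq> v \<longrightarrow> sp s u \<noteq> sp s v) \<and>
    up s \<subseteq> {v. cl s v \<noteq> None} \<and>
    (up s \<noteq> {} \<longrightarrow> \<not>(\<exists>c<w. c \<notin> used s)) \<and>
    ((\<exists>c<w. c \<notin> used s) \<longrightarrow> (\<forall>u v c. cl s u = Some c \<longrightarrow> cl s v = Some c \<longrightarrow> u = v))"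

definition ext :: "'a st \<Rightarrow> 'a st \<Rightarrow> bool" where
  "ext s t \<longleftrightarrow> (\<forall>v c. cl s v = Some c \<longrightarrow> cl t v = Some c \<and> sp t v = sp s v) \<and>
     (\<forall>v. nb s v \<subseteq> nb t v) \<and> up s \<subseteq> up t \<and> tm s \<le> tm t"

lemma ext_refl: "ext s s" by (simp add: ext_def)

lemma ext_trans: "ext s t \<Longrightarrow> ext t u \<Longrightarrow> ext s u"
  unfolding ext_def by (simp, blast)

lemma InvD:
  assumes "Inv P w s"
  shows "\<forall>v. nb s v \<subseteq> P - {v}" "\<forall>u v. u \<in> nb s v \<longrightarrow> v \<in> nb s u"
    "\<forall>v c. cl s v = Some c \<longrightarrow> c < w \<and> v \<in> P \<and> w - 1 \<le> card (nb s v) \<and> sp s v < tm s"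
    "\<forall>v\<in>P. cl s v = None \<longrightarrow> card (nb s v) \<le> w - 1"
    "\<forall>u v c. u \<in> nb s v \<longrightarrow> cl s v = Some c \<longrightarrow> cl s u \<noteq> Some c"
    "\<forall>u v. cl s u \<noteq> None \<longrightarrow> cl s v \<noteq> None \<longrightarrow> u \<noteq> v \<longrightarrow> sp s u \<noteq> sp s v"
    "up s \<subseteq> {v. cl s v \<noteq> None}"
    "up s \<noteq> {} \<longrightarrow> \<not>(\<exists>c<w. c \<notin> used s)"
    "(\<exists>c<w. c \<notin> used s) \<longrightarrow> (\<forall>u v c. cl s u = Some c \<longrightarrow> cl s v = Some c \<longrightarrow> u = v)"
  using assms unfolding Inv_def by blast+

lemma newc_fresh:
  assumes "\<exists>c<w. c \<notin> used s"
  shows "newc w s z < w \<and> newc w s z \<notin> used s"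
proof -
  have e: "\<exists>c. c < w \<and> c \<notin> used s" using assms by auto
  have "newc w s z = (SOME c. c<w \<and> c \<notin> used s)" using assms by (simp add: newc_def)
  then show ?thesis using someI_ex[OF e] by simp
qed

lemma newc_nonfresh:
  assumes inv: "Inv P w s" and fin: "finite P" and w: "1 \<le> w" and z: "z \<in> P" "cl s z = None"
  shows "newc w s z < w \<and> (\<forall>v\<in>nb s z. cl s v \<noteq> Some (newc w s z))"
proof -
  let ?C = "{c. \<exists>v\<in>nb s z. cl s v = Some c}"
  have finN: "finite (nb s z)" using InvD(1)[OF inv] fin by (meson finite_Diff finite_subset)
  have "?C \<subseteq> (\<lambda>v. the (cl s v)) ` nb s z" by force
  hence "card ?C \<le> card (nb s z)" using finN by (meson card_image_le card_mono finite_imageI order_trans)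
  also have "\<dots> \<le> w - 1" using InvD(4)[OF inv] z by blast
  finally have lt: "card ?C < card {..<w}" using w by simp
  have finC: "finite ?C"
    using \<open>?C \<subseteq> _\<close> finN by (meson finite_imageI finite_subset)
  have "\<not> {..<w} \<subseteq> ?C"
  proof
    assume "{..<w} \<subseteq> ?C"
    from card_mono[OF finC this] lt show False by simp
  qed
  then obtain c where "c < w" "c \<notin> ?C" by auto
  hence ex: "\<exists>c. c<w \<and> (\<forall>v\<in>nb s z. cl s v \<noteq> Some c)" by auto
  show ?thesis
  proof (cases "\<exists>c<w. c \<notin> used s")
    case True
    then show ?thesis using newc_fresh[OF True] by (auto simp: used_def)
  next
    case False
    then have "newc w s z = (SOME c. c<w \<and> (\<forall>v\<in>nb s z. cl s v \<noteq> Some c))"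
      unfolding newc_def by meson
    then show ?thesis using someI_ex[OF ex] by simp
  qed
qed

lemma used_upd: "used (s\<lparr>cl := (cl s)(z := Some c), sp := f, tm := t\<rparr>) \<subseteq> insert c (used s)"
  "used s - {c. \<exists>v. v = z \<and> cl s v = Some c} \<subseteq> used (s\<lparr>cl := (cl s)(z := Some c), sp := f, tm := t\<rparr>)"
  unfolding used_def by auto

lemma mat_Inv:
  assumes inv: "Inv P w s" and fin: "finite P" and w: "1 \<le> w"
  shows "Inv P w (mat P w z s) \<and> ext s (mat P w z s)"
proof (cases "z \<in> P \<and> cl s z = None \<and> w - 1 \<le> card (nb s z)")
  case False
  then have "mat P w z s = s" unfolding mat_def by meson
  then show ?thesis using inv by (simp add: ext_refl)
next
  case True
  define c where "c = newc w s z"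
  define t where "t = s\<lparr>cl := (cl s)(z := Some c), sp := (sp s)(z := tm s), tm := Suc (tm s)\<rparr>"
  have m: "mat P w z s = t" using True by (simp add: mat_def t_def c_def)
  have cw: "c < w" and avoid: "\<forall>v\<in>nb s z. cl s v \<noteq> Some c"
    using newc_nonfresh[OF inv fin w] True unfolding c_def by auto
  have usedt: "used t = insert c (used s)"
    using True unfolding used_def t_def by (auto, metis option.distinct(1))
  note I = InvD[OF inv]
  have fr: "(\<exists>c<w. c \<notin> used s) \<Longrightarrow> c \<notin> used s"
    using newc_fresh[of w s z] unfolding c_def by blast
  have "Inv P w t"
    unfolding Inv_def
  proof (intro conjI)
    show "\<forall>v. nb t v \<subseteq> P - {v}" using I(1) by (simp add: t_def)
    show "\<forall>u v. u \<in> nb t v \<longrightarrow> v \<in> nb t u" using I(2) by (simp add: t_def)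
    show "\<forall>v c'. cl t v = Some c' \<longrightarrow> c' < w \<and> v \<in> P \<and> w - 1 \<le> card (nb t v) \<and> sp t v < tm t"
    proof (intro allI impI)
      fix v c' assume a: "cl t v = Some c'"
      show "c' < w \<and> v \<in> P \<and> w - 1 \<le> card (nb t v) \<and> sp t v < tm t"
      proof (cases "v = z")
        case True then show ?thesis using a \<open>z \<in> P \<and> cl s z = None \<and> w - 1 \<le> card (nb s z)\<close> cw
          by (simp add: t_def)
      next
        case False
        then have "cl s v = Some c'" using a by (simp add: t_def)
        then have "c' < w \<and> v \<in> P \<and> w - 1 \<le> card (nb s v) \<and> sp s v < tm s" using I(3) by blast
        then show ?thesis using False by (simp add: t_def)
      qed
    qed
    show "\<forall>v\<in>P. cl t v = None \<longrightarrow> card (nb t v) \<le> w - 1" using I(4) by (simp add: t_def)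
    show "\<forall>u v c'. u \<in> nb t v \<longrightarrow> cl t v = Some c' \<longrightarrow> cl t u \<noteq> Some c'"
    proof (intro allI impI)
      fix u v c' assume un: "u \<in> nb t v" and cv: "cl t v = Some c'"
      have un': "u \<in> nb s v" using un by (simp add: t_def)
      show "cl t u \<noteq> Some c'"
      proof (cases "v = z")
        case True
        then have "c' = c" "u \<noteq> z" using cv un' I(1) by (auto simp: t_def)
        then show ?thesis using avoid un' True by (simp add: t_def)
      next
        case False
        then have cv': "cl s v = Some c'" using cv by (simp add: t_def)
        show ?thesis
        proof (cases "u = z")
          case True
          then have "v \<in> nb s z" using un' I(2) by blast
          then have "c \<noteq> c'" using avoid cv' by auto
          then show ?thesis using True by (simp add: t_def)
        next
          case False
          then show ?thesis using I(5) un' cv' by (simp add: t_def)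
        qed
      qed
    qed
    show "\<forall>u v. cl t u \<noteq> None \<longrightarrow> cl t v \<noteq> None \<longrightarrow> u \<noteq> v \<longrightarrow> sp t u \<noteq> sp t v"
    proof (intro allI impI)
      fix u v assume cu: "cl t u \<noteq> None" and cv: "cl t v \<noteq> None" and uv: "u \<noteq> v"
      show "sp t u \<noteq> sp t v"
      proof (cases "u = z")
        case True
        then have "v \<noteq> z" "cl s v \<noteq> None" using uv cv by (auto simp: t_def)
        then have "sp s v < tm s" using I(3) by auto
        then show ?thesis using True \<open>v \<noteq> z\<close> by (simp add: t_def)
      next
        case False
        show ?thesis
        proof (cases "v = z")
          case True
          then have "cl s u \<noteq> None" using False cu by (auto simp: t_def)
          then have "sp s u < tm s" using I(3) by auto
          then show ?thesis using True False by (simp add: t_def)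
        next
          case False2: False
          then show ?thesis using False cu cv uv I(6) by (simp add: t_def)
        qed
      qed
    qed
    show "up t \<subseteq> {v. cl t v \<noteq> None}" using I(7) by (auto simp: t_def)
    show "up t \<noteq> {} \<longrightarrow> \<not>(\<exists>c<w. c \<notin> used t)"
    proof
      assume "up t \<noteq> {}"
      then have "up s \<noteq> {}" by (simp add: t_def)
      then have "\<forall>c'<w. c' \<in> used s" using I(8) by blast
      then show "\<not>(\<exists>c<w. c \<notin> used t)" using usedt by blast
    qed
    show "(\<exists>c<w. c \<notin> used t) \<longrightarrow> (\<forall>u v c'. cl t u = Some c' \<longrightarrow> cl t v = Some c' \<longrightarrow> u = v)"
    proof (intro impI allI)
      fix u v c' assume ex: "\<exists>c<w. c \<notin> used t" and a: "cl t u = Some c'" "cl t v = Some c'"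
      have exs: "\<exists>c<w. c \<notin> used s" using ex usedt by auto
      have "c \<notin> used s" using fr[OF exs] .
      then have "\<And>x. x \<noteq> z \<Longrightarrow> cl s x \<noteq> Some c" by (auto simp: used_def)
      show "u = v"
      proof (cases "u = z \<or> v = z")
        case True
        then show ?thesis using a \<open>\<And>x. x \<noteq> z \<Longrightarrow> cl s x \<noteq> Some c\<close>
          by (auto simp: t_def split: if_splits)
      next
        case False
        then have "cl s u = Some c'" "cl s v = Some c'" using a by (auto simp: t_def)
        then show ?thesis using I(9) exs by blast
      qed
    qed
  qed
  moreover have "\<forall>v c'. cl s v = Some c' \<longrightarrow> cl t v = Some c' \<and> sp t v = sp s v"
  proof (intro allI impI)
    fix v c' assume "cl s v = Some c'"
    then have "v \<noteq> z" using True by auto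
    then show "cl t v = Some c' \<and> sp t v = sp s v" using \<open>cl s v = Some c'\<close> by (simp add: t_def)
  qed
  then have "ext s t" by (simp add: ext_def t_def)
  ultimately show ?thesis using m by simp
qed


lemma mat_nb[simp]: "nb (mat P w z s) = nb s" and mat_up[simp]: "up (mat P w z s) = up s"
  by (simp_all add: mat_def)

lemma mat_uncol:
  assumes "cl (mat P w z s) v = None"
  shows "cl s v = None \<and> (v = z \<longrightarrow> \<not>(z \<in> P \<and> w - 1 \<le> card (nb s z)))"
  using assms by (auto simp: mat_def split: if_splits)

definition pot :: "'a set \<Rightarrow> 'a st \<Rightarrow> nat" where
  "pot P s = (\<Sum>v\<in>P. card (nb s v)) + 2 * card (up s)"

lemma step_Inv:
  assumes inv: "Inv P w s" and fin: "finite P" and w: "1 \<le> w" and st: "step P w s x y = (a, s')"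
  shows "Inv P w s' \<and> ext s s' \<and> pot P s' \<le> pot P s + 2"
proof (cases "x = y \<or> x \<notin> P \<or> y \<notin> P")
  case True
  then show ?thesis using st inv by (simp add: step_def ext_refl)
next
  case False
  define s1 where "s1 = mat P w y (mat P w x s)"
  have m1: "Inv P w (mat P w x s)" "ext s (mat P w x s)" using mat_Inv[OF inv fin w] by auto
  have m2: "Inv P w s1" "ext (mat P w x s) s1" using mat_Inv[OF m1(1) fin w] unfolding s1_def by auto
  have e1: "ext s s1" using ext_trans[OF m1(2) m2(2)] .
  have nb1: "nb s1 = nb s" "up s1 = up s" by (simp_all add: s1_def)
  note I = InvD[OF m2(1)]
  have stp: "step P w s x y = (if cl s1 x \<noteq> None \<and> cl s1 y \<noteq> None then
        (if cl s1 x = cl s1 y then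
           (if sp s1 y < sp s1 x then (Gt, s1\<lparr>up := insert x (up s1)\<rparr>)
            else (Lt, s1\<lparr>up := insert y (up s1)\<rparr>))
         else (Inc, s1))
      else (Inc, s1\<lparr>nb := (nb s1)(x := insert y (nb s1 x), y := insert x (nb s1 y))\<rparr>))"
    using False unfolding step_def Let_def s1_def by simp
  have "up s1 \<subseteq> P"
  proof
    fix v assume "v \<in> up s1"
    then have "cl s1 v \<noteq> None" using I(7) by auto
    then obtain c where "cl s1 v = Some c" by auto
    then show "v \<in> P" using I(3) by blast
  qed
  then have upfin: "finite (up s1)" using fin by (rule finite_subset)
  show ?thesis
  proof (cases "cl s1 x \<noteq> None \<and> cl s1 y \<noteq> None")
    case both: True
    show ?thesis
    proof (cases "cl s1 x = cl s1 y")
      case same: True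
      then obtain u where u: "u = x \<or> u = y" and s'd: "s' = s1\<lparr>up := insert u (up s1)\<rparr>"
        using st both same unfolding stp by (auto split: if_splits)
      have ucol: "cl s1 u \<noteq> None" using u both by auto
      have nofresh: "\<not>(\<exists>c<w. c \<notin> used s1)"
        using I(9) same both False by auto
      have "Inv P w s'" unfolding Inv_def s'd using I ucol nofresh by (simp add: used_def)
      moreover have "ext s1 s'" by (auto simp: ext_def s'd)
      moreover have "pot P s' \<le> pot P s1 + 2"
        unfolding pot_def s'd using upfin by (simp add: card_insert_if)
      moreover have "pot P s1 = pot P s" by (simp add: pot_def nb1)
      ultimately show ?thesis using ext_trans[OF e1, of s'] by simp
    next
      case diff: False
      then have "s' = s1" using st both unfolding stp by simp
      then show ?thesis using m2(1) e1 by (simp add: pot_def nb1)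
    qed
  next
    case notboth: False
    have s'd: "s' = s1\<lparr>nb := (nb s1)(x := insert y (nb s1 x), y := insert x (nb s1 y))\<rparr>"
    proof -
      have "step P w s x y = (Inc, s1\<lparr>nb := (nb s1)(x := insert y (nb s1 x), y := insert x (nb s1 y))\<rparr>)"
        unfolding stp by (rule if_not_P[OF notboth])
      then show ?thesis using st by simp
    qed
    have cx: "cl s1 x = None \<Longrightarrow> card (nb s1 x) < w - 1"
    proof -
      assume "cl s1 x = None"
      then have "cl (mat P w x s) x = None" unfolding s1_def using mat_uncol[of P w y "mat P w x s" x] by simp
      then show ?thesis using mat_uncol[of P w x s x] False by (auto simp: nb1)
    qed
    have cy: "cl s1 y = None \<Longrightarrow> card (nb s1 y) < w - 1"
    proof -
      assume "cl s1 y = None"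
      then have "cl (mat P w x s) y = None \<and> \<not>(y \<in> P \<and> w - 1 \<le> card (nb (mat P w x s) y))"
        unfolding s1_def using mat_uncol[of P w y "mat P w x s" y] by simp
      then show ?thesis using False by (auto simp: nb1)
    qed
    have finnb: "\<And>v. finite (nb s1 v)"
    proof -
      fix v have "nb s1 v \<subseteq> P" using I(1) by blast
      then show "finite (nb s1 v)" using fin by (rule finite_subset)
    qed
    have "Inv P w s'"
      unfolding Inv_def
    proof (intro conjI)
      show "\<forall>v. nb s' v \<subseteq> P - {v}" using I(1) False by (auto simp: s'd)
      show "\<forall>u v. u \<in> nb s' v \<longrightarrow> v \<in> nb s' u" using I(2) by (auto simp: s'd)
      show "\<forall>v c. cl s' v = Some c \<longrightarrow> c < w \<and> v \<in> P \<and> w - 1 \<le> card (nb s' v) \<and> sp s' v < tm s'"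
      proof (intro allI impI)
        fix v c assume "cl s' v = Some c"
        then have "cl s1 v = Some c" by (simp add: s'd)
        then have h: "c < w \<and> v \<in> P \<and> w - 1 \<le> card (nb s1 v) \<and> sp s1 v < tm s1" using I(3) by blast
        have "card (nb s1 v) \<le> card (nb s' v)" using finnb by (auto simp: s'd intro!: card_mono)
        then show "c < w \<and> v \<in> P \<and> w - 1 \<le> card (nb s' v) \<and> sp s' v < tm s'" using h by (simp add: s'd)
      qed
      show "\<forall>v\<in>P. cl s' v = None \<longrightarrow> card (nb s' v) \<le> w - 1"
      proof (intro ballI impI)
        fix v assume "v \<in> P" "cl s' v = None"
        then have cv: "cl s1 v = None" by (simp add: s'd)
        show "card (nb s' v) \<le> w - 1"
        proof (cases "v = x \<or> v = y")
          case True
          then show ?thesis using cx cy cv finnb False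
            by (auto simp: s'd card_insert_if)
        next
          case False
          then show ?thesis using I(4) \<open>v \<in> P\<close> cv by (simp add: s'd)
        qed
      qed
      show "\<forall>u v c. u \<in> nb s' v \<longrightarrow> cl s' v = Some c \<longrightarrow> cl s' u \<noteq> Some c"
        using I(5) notboth by (auto simp: s'd)
      show "\<forall>u v. cl s' u \<noteq> None \<longrightarrow> cl s' v \<noteq> None \<longrightarrow> u \<noteq> v \<longrightarrow> sp s' u \<noteq> sp s' v"
        using I(6) by (simp add: s'd)
      show "up s' \<subseteq> {v. cl s' v \<noteq> None}" using I(7) by (simp add: s'd)
      show "up s' \<noteq> {} \<longrightarrow> \<not>(\<exists>c<w. c \<notin> used s')" using I(8) by (simp add: s'd used_def)
      show "(\<exists>c<w. c \<notin> used s') \<longrightarrow> (\<forall>u v c. cl s' u = Some c \<longrightarrow> cl s' v = Some c \<longrightarrow> u = v)"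
        using I(9) by (simp add: s'd used_def)
    qed
    moreover have "ext s1 s'" by (auto simp: ext_def s'd)
    moreover have "pot P s' \<le> pot P s1 + 2"
    proof -
      have "(\<Sum>v\<in>P. card (nb s' v)) \<le> (\<Sum>v\<in>P. card (nb s1 v) + (if v \<in> {x,y} then 1 else 0))"
      proof (rule sum_mono)
        fix v assume "v \<in> P"
        show "card (nb s' v) \<le> card (nb s1 v) + (if v \<in> {x,y} then 1 else 0)"
          using finnb False by (auto simp: s'd card_insert_if)
      qed
      also have "\<dots> = (\<Sum>v\<in>P. card (nb s1 v)) + card ({x,y} \<inter> P)"
      proof -
        have e: "{v. v = x \<or> v = y} = {x,y}" by auto
        show ?thesis using fin by (simp add: sum.distrib sum.If_cases Int_commute e)
      qed
      also have "card ({x,y} \<inter> P) = 2" using False by auto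
      finally show ?thesis by (simp add: pot_def s'd)
    qed
    moreover have "pot P s1 = pot P s" by (simp add: pot_def nb1)
    ultimately show ?thesis using ext_trans[OF e1, of s'] by simp
  qed
qed


lemma adv_Inv:
  assumes "Inv P w s" "finite P" "1 \<le> w" "adv P w T s = (o', h, sf)"
  shows "Inv P w sf \<and> ext s sf \<and> pot P sf \<le> pot P s + 2 * length h \<and>
    (\<forall>(x,y,a)\<in>set h. \<exists>s0 s'. Inv P w s0 \<and> step P w s0 x y = (a, s') \<and> ext s' sf)"
  using assms
proof (induction T arbitrary: s h o')
  case (Output S) then show ?case by (simp add: ext_refl)
next
  case (Query x y k)
  obtain a s' where as: "step P w s x y = (a, s')" by fastforce
  obtain o2 h2 sf2 where r: "adv P w (k a) s' = (o2, h2, sf2)" by (metis prod_cases3)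
  from Query.prems as r have h: "h = (x,y,a) # h2" and sf: "sf = sf2" by auto
  have st: "Inv P w s'" "ext s s'" "pot P s' \<le> pot P s + 2"
    using step_Inv[OF Query.prems(1-3) as] by auto
  have IH: "Inv P w sf \<and> ext s' sf \<and> pot P sf \<le> pot P s' + 2 * length h2 \<and>
    (\<forall>(x,y,a)\<in>set h2. \<exists>s0 s'. Inv P w s0 \<and> step P w s0 x y = (a, s') \<and> ext s' sf)"
  proof -
    have kr: "k a \<in> range k" by simp
    have r': "adv P w (k a) s' = (o2, h2, sf)" using r sf by simp
    show ?thesis using Query.IH[OF kr st(1) Query.prems(2,3) r'] .
  qed
  show ?case
  proof (intro conjI)
    show "Inv P w sf" using IH by blast
    show "ext s sf" using IH st(2) ext_trans by blast
    show "pot P sf \<le> pot P s + 2 * length h" using IH st(3) h by simp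
    show "\<forall>(x', y', a')\<in>set h. \<exists>s0 s'. Inv P w s0 \<and> step P w s0 x' y' = (a', s') \<and> ext s' sf"
      using IH h Query.prems(1) as by auto
  qed
qed

lemma free_color:
  assumes "finite N" "card N < w"
  shows "\<exists>c<w. \<forall>u\<in>N. g u \<noteq> Some c"
proof -
  let ?C = "{c. \<exists>u\<in>N. g u = Some c}"
  have sub: "?C \<subseteq> (\<lambda>u. the (g u)) ` N" by force
  have finC: "finite ?C" using sub assms(1) by (meson finite_imageI finite_subset)
  have "card ?C \<le> card ((\<lambda>u. the (g u)) ` N)" using sub assms(1) by (intro card_mono) auto
  also have "\<dots> \<le> card N" using assms(1) by (rule card_image_le)
  finally have "card ?C \<le> card N" .
  then have lt: "card ?C < card {..<w}" using assms(2) by simp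
  have "\<not> {..<w} \<subseteq> ?C"
  proof
    assume "{..<w} \<subseteq> ?C"
    from card_mono[OF finC this] lt show False by simp
  qed
  then show ?thesis by auto
qed

lemma extend_col:
  assumes "finite A"
    and nbP: "\<forall>v. nb s v \<subseteq> P - {v}" and sym: "\<forall>u v. u \<in> nb s v \<longrightarrow> v \<in> nb s u"
    and finP: "finite P"
  shows "\<forall>g. (\<forall>v\<in>P. g v = None \<longrightarrow> v \<in> A \<and> card (nb s v) < w) \<and> (\<forall>v c. g v = Some c \<longrightarrow> c < w)
    \<and> (\<forall>v u c. u \<in> nb s v \<longrightarrow> g v = Some c \<longrightarrow> g u \<noteq> Some c) \<and> 1 \<le> w \<longrightarrow>
    (\<exists>f. (\<forall>v\<in>P. f v < w) \<and> (\<forall>v\<in>P. \<forall>c. g v = Some c \<longrightarrow> f v = c) \<and> (\<forall>v\<in>P. \<forall>u\<in>nb s v. f v \<noteq> f u))"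
  using assms(1)
proof (induction A rule: finite_induct)
  case empty
  show ?case
  proof (intro allI impI)
    fix g assume a: "(\<forall>v\<in>P. g v = None \<longrightarrow> v \<in> {} \<and> card (nb s v) < w) \<and> (\<forall>v c. g v = Some c \<longrightarrow> c < w)
      \<and> (\<forall>v u c. u \<in> nb s v \<longrightarrow> g v = Some c \<longrightarrow> g u \<noteq> Some c) \<and> 1 \<le> w"
    define f where "f v = (case g v of Some c \<Rightarrow> c | None \<Rightarrow> 0)" for v
    have col: "\<forall>v\<in>P. \<exists>c. g v = Some c" using a by auto
    show "\<exists>f. (\<forall>v\<in>P. f v < w) \<and> (\<forall>v\<in>P. \<forall>c. g v = Some c \<longrightarrow> f v = c) \<and> (\<forall>v\<in>P. \<forall>u\<in>nb s v. f v \<noteq> f u)"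
    proof (intro exI conjI ballI allI impI)
      fix v assume "v \<in> P" then show "f v < w" using col a by (auto simp: f_def)
    next
      fix v c assume "v \<in> P" "g v = Some c" then show "f v = c" by (simp add: f_def)
    next
      fix v u assume v: "v \<in> P" and u: "u \<in> nb s v"
      have "u \<in> P" using u nbP by blast
      then obtain cu where cu: "g u = Some cu" using col by blast
      obtain cv where cv: "g v = Some cv" using col v by blast
      show "f v \<noteq> f u" using a u cu cv by (auto simp: f_def)
    qed
  qed
next
  case (insert a A)
  show ?case
  proof (intro allI impI)
    fix g assume ga: "(\<forall>v\<in>P. g v = None \<longrightarrow> v \<in> insert a A \<and> card (nb s v) < w) \<and> (\<forall>v c. g v = Some c \<longrightarrow> c < w)
      \<and> (\<forall>v u c. u \<in> nb s v \<longrightarrow> g v = Some c \<longrightarrow> g u \<noteq> Some c) \<and> 1 \<le> w"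
    show "\<exists>f. (\<forall>v\<in>P. f v < w) \<and> (\<forall>v\<in>P. \<forall>c. g v = Some c \<longrightarrow> f v = c) \<and> (\<forall>v\<in>P. \<forall>u\<in>nb s v. f v \<noteq> f u)"
    proof (cases "a \<in> P \<and> g a = None")
      case False
      then have "(\<forall>v\<in>P. g v = None \<longrightarrow> v \<in> A \<and> card (nb s v) < w)" using ga by auto
      then show ?thesis using insert.IH ga by blast
    next
      case True
      have finN: "finite (nb s a)" using nbP finP by (meson finite_Diff finite_subset)
      have "card (nb s a) < w" using ga True by blast
      then obtain c where c: "c < w" "\<forall>u\<in>nb s a. g u \<noteq> Some c" using free_color[OF finN] by blast
      define g' where "g' = g(a := Some c)"
      have "(\<forall>v\<in>P. g' v = None \<longrightarrow> v \<in> A \<and> card (nb s v) < w) \<and> (\<forall>v c. g' v = Some c \<longrightarrow> c < w)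
        \<and> (\<forall>v u c. u \<in> nb s v \<longrightarrow> g' v = Some c \<longrightarrow> g' u \<noteq> Some c) \<and> 1 \<le> w"
      proof (intro conjI allI impI ballI)
        fix v assume "v \<in> P" "g' v = None"
        then show "v \<in> A" "card (nb s v) < w" using ga by (auto simp: g'_def split: if_splits)
      next
        fix v c' assume "g' v = Some c'" then show "c' < w" using ga c by (auto simp: g'_def split: if_splits)
      next
        fix v u c' assume u: "u \<in> nb s v" and gv: "g' v = Some c'"
        show "g' u \<noteq> Some c'"
        proof (cases "v = a")
          case True
          then have "u \<noteq> a" using u nbP by blast
          then show ?thesis using True gv c u by (simp add: g'_def)
        next
          case False
          then have gv': "g v = Some c'" using gv by (simp add: g'_def)
          show ?thesis
          proof (cases "u = a")
            case True
            then have "v \<in> nb s a" using u sym by blast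
            then have "c \<noteq> c'" using c gv' by auto
            then show ?thesis using True by (simp add: g'_def)
          next
            case False
            have "g u \<noteq> Some c'" using ga u gv' by blast
            then show ?thesis using False by (simp add: g'_def)
          qed
        qed
      next
        show "1 \<le> w" using ga by simp
      qed
      then obtain f where f: "(\<forall>v\<in>P. f v < w) \<and> (\<forall>v\<in>P. \<forall>c. g' v = Some c \<longrightarrow> f v = c) \<and> (\<forall>v\<in>P. \<forall>u\<in>nb s v. f v \<noteq> f u)"
        using insert.IH[rule_format, of g'] by blast
      have "\<forall>v\<in>P. \<forall>c'. g v = Some c' \<longrightarrow> f v = c'"
      proof (intro ballI allI impI)
        fix v c' assume v: "v \<in> P" and gv: "g v = Some c'"
        then have "v \<noteq> a" using True by auto
        then have "g' v = Some c'" using gv by (simp add: g'_def)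
        then show "f v = c'" using f v by blast
      qed
      then show ?thesis using f by blast
    qed
  qed
qed

definition goodcol :: "'a set \<Rightarrow> nat \<Rightarrow> 'a st \<Rightarrow> ('a \<Rightarrow> nat) \<Rightarrow> bool" where
  "goodcol P w s f \<longleftrightarrow> (\<forall>v\<in>P. f v < w) \<and> (\<forall>v\<in>P. \<forall>c. cl s v = Some c \<longrightarrow> f v = c) \<and> (\<forall>v\<in>P. \<forall>u\<in>nb s v. f v \<noteq> f u)"

lemma goodcol_ex:
  assumes inv: "Inv P w s" and fin: "finite P" and w: "1 \<le> w"
  shows "\<exists>f. goodcol P w s f"
proof -
  note I = InvD[OF inv]
  have "(\<forall>v\<in>P. cl s v = None \<longrightarrow> v \<in> P \<and> card (nb s v) < w) \<and> (\<forall>v c. cl s v = Some c \<longrightarrow> c < w)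
    \<and> (\<forall>v u c. u \<in> nb s v \<longrightarrow> cl s v = Some c \<longrightarrow> cl s u \<noteq> Some c) \<and> 1 \<le> w"
  proof (intro conjI)
    show "\<forall>v\<in>P. cl s v = None \<longrightarrow> v \<in> P \<and> card (nb s v) < w"
    proof (intro ballI impI)
      fix v assume "v \<in> P" "cl s v = None"
      then have "card (nb s v) \<le> w - 1" using I(4) by blast
      then show "v \<in> P \<and> card (nb s v) < w" using w \<open>v \<in> P\<close> by linarith
    qed
    show "\<forall>v c. cl s v = Some c \<longrightarrow> c < w" using I(3) by blast
    show "\<forall>v u c. u \<in> nb s v \<longrightarrow> cl s v = Some c \<longrightarrow> cl s u \<noteq> Some c" using I(5) by blast
    show "1 \<le> w" using w .
  qed
  with extend_col[OF fin I(1) I(2) fin] show ?thesis unfolding goodcol_def by blast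
qed

definition fc :: "'a set \<Rightarrow> nat \<Rightarrow> 'a st \<Rightarrow> 'a \<Rightarrow> nat" where
  "fc P w s = (SOME f. goodcol P w s f)"

lemma fc_good: "Inv P w s \<Longrightarrow> finite P \<Longrightarrow> 1 \<le> w \<Longrightarrow> goodcol P w s (fc P w s)"
proof -
  assume "Inv P w s" "finite P" "1 \<le> w"
  from goodcol_ex[OF this] show ?thesis unfolding fc_def by (rule someI_ex)
qed

definition key :: "('a \<Rightarrow> nat) \<Rightarrow> 'a st \<Rightarrow> 'a \<Rightarrow> nat" where
  "key rk s v = (case cl s v of Some _ \<Rightarrow> sp s v | None \<Rightarrow> tm s + rk v)"

lemma key_inj:
  assumes inv: "Inv P w s" and rk: "inj_on rk P"
  shows "inj_on (key rk s) P"
proof (rule inj_onI)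
  fix u v assume u: "u \<in> P" and v: "v \<in> P" and e: "key rk s u = key rk s v"
  note I = InvD[OF inv]
  show "u = v"
  proof (cases "cl s u")
    case None
    show ?thesis
    proof (cases "cl s v")
      case None
      then show ?thesis using \<open>cl s u = None\<close> e rk u v by (simp add: key_def inj_on_def)
    next
      case (Some c)
      then have "sp s v < tm s" using I(3) by blast
      then show ?thesis using \<open>cl s u = None\<close> Some e by (simp add: key_def)
    qed
  next
    case (Some cu)
    then have lu: "sp s u < tm s" using I(3) by blast
    show ?thesis
    proof (cases "cl s v")
      case None
      then show ?thesis using Some e lu by (simp add: key_def)
    next
      case (Some cv)
      then show ?thesis using \<open>cl s u = Some cu\<close> e I(6) by (auto simp: key_def)
    qed
  qed
qed

definition Rof :: "'a set \<Rightarrow> nat \<Rightarrow> ('a \<Rightarrow> nat) \<Rightarrow> 'a st \<Rightarrow> 'a \<Rightarrow> 'a \<Rightarrow> bool" where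
  "Rof P w rk s = chainrel P (fc P w s) (key rk s)"


lemma step_cons:
  assumes inv: "Inv P w s" and fin: "finite P" and w: "1 \<le> w" and st: "step P w s x y = (a, s')"
    and e: "ext s' sf" and invf: "Inv P w sf"
  shows "answer_of (Rof P w rk sf) x y = a \<and>
    (x \<noteq> y \<and> x \<in> P \<and> y \<in> P \<longrightarrow> (a = Gt \<longrightarrow> x \<in> up sf) \<and> (a = Lt \<longrightarrow> y \<in> up sf) \<and>
       (cl sf x = None \<longrightarrow> y \<in> nb sf x) \<and> (cl sf y = None \<longrightarrow> x \<in> nb sf y))"
proof -
  have G: "goodcol P w sf (fc P w sf)" using fc_good[OF invf fin w] .
  let ?f = "fc P w sf"
  let ?R = "Rof P w rk sf"
  show ?thesis
  proof (cases "x = y \<or> x \<notin> P \<or> y \<notin> P")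
    case True
    then have "a = Inc" using st by (simp add: step_def)
    moreover have "answer_of ?R x y = Inc" using True
      by (auto simp: answer_of_def Rof_def chainrel_def)
    ultimately show ?thesis using True by blast
  next
    case False
    define s1 where "s1 = mat P w y (mat P w x s)"
    have m1: "Inv P w (mat P w x s)" using mat_Inv[OF inv fin w] by auto
    have m2: "Inv P w s1" using mat_Inv[OF m1(1) fin w] unfolding s1_def by auto
    note I = InvD[OF m2]
    have stp: "step P w s x y = (if cl s1 x \<noteq> None \<and> cl s1 y \<noteq> None then
          (if cl s1 x = cl s1 y then
             (if sp s1 y < sp s1 x then (Gt, s1\<lparr>up := insert x (up s1)\<rparr>)
              else (Lt, s1\<lparr>up := insert y (up s1)\<rparr>))
           else (Inc, s1))
        else (Inc, s1\<lparr>nb := (nb s1)(x := insert y (nb s1 x), y := insert x (nb s1 y))\<rparr>))"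
      using False unfolding step_def Let_def s1_def by simp
    have xP: "x \<in> P" "y \<in> P" "x \<noteq> y" using False by auto
    show ?thesis
    proof (cases "cl s1 x \<noteq> None \<and> cl s1 y \<noteq> None")
      case both: True
      then obtain cx cy where cx: "cl s1 x = Some cx" and cy: "cl s1 y = Some cy" by auto
      have ecl: "\<And>v c. cl s1 v = Some c \<Longrightarrow> cl sf v = Some c \<and> sp sf v = sp s1 v"
        using e st both unfolding stp ext_def by (auto split: if_splits)
      have fx: "?f x = cx" "?f y = cy" using G ecl[OF cx] ecl[OF cy] xP unfolding goodcol_def by auto
      have kx: "key rk sf x = sp s1 x" "key rk sf y = sp s1 y"
        using ecl[OF cx] ecl[OF cy] by (auto simp: key_def)
      show ?thesis
      proof (cases "cx = cy")
        case same: True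
        have spd: "sp s1 x \<noteq> sp s1 y" using I(6) cx cy xP by auto
        show ?thesis
        proof (cases "sp s1 y < sp s1 x")
          case True
          then have a: "a = Gt" "s' = s1\<lparr>up := insert x (up s1)\<rparr>" using st cx cy same unfolding stp by auto
          have "?R x y" using xP fx kx same True by (simp add: Rof_def chainrel_def)
          moreover have "x \<in> up sf" using e a by (auto simp: ext_def)
          ultimately show ?thesis using a ecl[OF cx] ecl[OF cy] by (simp add: answer_of_def)
        next
          case False
          then have a: "a = Lt" "s' = s1\<lparr>up := insert y (up s1)\<rparr>" using st cx cy same unfolding stp by auto
          have lt: "sp s1 x < sp s1 y" using False spd by simp
          have "?R y x" "\<not> ?R x y" using xP fx kx same lt by (auto simp: Rof_def chainrel_def)
          moreover have "y \<in> up sf" using e a by (auto simp: ext_def)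
          ultimately show ?thesis using a ecl[OF cx] ecl[OF cy] by (simp add: answer_of_def)
        qed
      next
        case diff: False
        then have a: "a = Inc" using st cx cy unfolding stp by auto
        have "\<not> ?R x y" "\<not> ?R y x" using fx diff by (auto simp: Rof_def chainrel_def)
        then show ?thesis using a ecl[OF cx] ecl[OF cy] by (simp add: answer_of_def)
      qed
    next
      case notboth: False
      then have a: "a = Inc" and s'd: "s' = s1\<lparr>nb := (nb s1)(x := insert y (nb s1 x), y := insert x (nb s1 y))\<rparr>"
        using st unfolding stp by auto
      have "y \<in> nb s' x" "x \<in> nb s' y" using xP by (auto simp: s'd)
      then have n: "y \<in> nb sf x" "x \<in> nb sf y" using e by (auto simp: ext_def)
      then have "?f x \<noteq> ?f y" using G xP unfolding goodcol_def by blast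
      then have "\<not> ?R x y" "\<not> ?R y x" by (auto simp: Rof_def chainrel_def)
      then show ?thesis using a n by (simp add: answer_of_def)
    qed
  qed
qed


lemma antichain_conv: "antichain_in P (\<lambda>u v. R v u) A = antichain_in P R A"
  unfolding antichain_in_def incomparable_def by blast

theorem theorem12:
  fixes P :: "'a set" and n w :: nat and T :: "'a qtree"
  assumes "finite P" and "card P = n"
    and "1 \<le> w" and "w \<le> n"
    and correct: "\<forall>R. poset_on P R \<and> width P R \<le> w \<longrightarrow>
                     fst (run T R) = minimal_elements P R"
  shows "\<exists>R. poset_on P R \<and> width P R \<le> w \<and>
           real (snd (run T R)) \<ge> (real w + 1) / 2 * real n - real w"
proof -
  have fin: "finite P" and w: "1 \<le> w" using assms by auto
  obtain rk :: "'a \<Rightarrow> nat" where rk: "inj_on rk P"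
    using finite_imp_inj_to_nat_seg[OF fin] by blast
  define s0 :: "'a st" where "s0 = \<lparr>nb = \<lambda>_. {}, cl = \<lambda>_. None, sp = \<lambda>_. 0, tm = 0, up = {}\<rparr>"
  have inv0: "Inv P w s0" unfolding Inv_def s0_def by (simp add: used_def)
  obtain o' h sf where adv: "adv P w T s0 = (o', h, sf)" by (metis prod_cases3)
  have AI: "Inv P w sf" "pot P sf \<le> pot P s0 + 2 * length h"
    "\<forall>(x,y,a)\<in>set h. \<exists>s0 s'. Inv P w s0 \<and> step P w s0 x y = (a, s') \<and> ext s' sf"
    using adv_Inv[OF inv0 fin w adv] by auto
  have pot0: "pot P s0 = 0" by (simp add: pot_def s0_def)
  note I = InvD[OF AI(1)]
  define R where "R = Rof P w rk sf"
  let ?f = "fc P w sf"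
  let ?k = "key rk sf"
  have G: "goodcol P w sf ?f" using fc_good[OF AI(1) fin w] .
  have kinj: "inj_on ?k P" using key_inj[OF AI(1) rk] .
  have H: "\<forall>(x,y,a)\<in>set h. answer_of R x y = a \<and>
    (x \<noteq> y \<and> x \<in> P \<and> y \<in> P \<longrightarrow> (a = Gt \<longrightarrow> x \<in> up sf) \<and> (a = Lt \<longrightarrow> y \<in> up sf) \<and>
       (cl sf x = None \<longrightarrow> y \<in> nb sf x) \<and> (cl sf y = None \<longrightarrow> x \<in> nb sf y))"
  proof
    fix e assume "e \<in> set h"
    then obtain x y a where e: "e = (x,y,a)" "(x,y,a) \<in> set h" by (metis prod_cases3)
    then obtain s1 s' where "Inv P w s1" "step P w s1 x y = (a, s')" "ext s' sf" using AI(3) by blast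
    from step_cons[OF this(1) fin w this(2) this(3) AI(1), of rk] show "case e of (x,y,a) \<Rightarrow> answer_of R x y = a \<and>
    (x \<noteq> y \<and> x \<in> P \<and> y \<in> P \<longrightarrow> (a = Gt \<longrightarrow> x \<in> up sf) \<and> (a = Lt \<longrightarrow> y \<in> up sf) \<and>
       (cl sf x = None \<longrightarrow> y \<in> nb sf x) \<and> (cl sf y = None \<longrightarrow> x \<in> nb sf y))"
      unfolding R_def e by simp
  qed
  have HR: "\<forall>(x,y,a)\<in>set h. answer_of R x y = a" using H by auto
  have runR: "run T R = (o', length h)" using run_adv[OF adv HR] .
  have fcw: "\<forall>v\<in>P. ?f v < w" using G by (simp add: goodcol_def)
  have Rpos: "poset_on P R" unfolding R_def Rof_def by (rule chainrel_poset)
  have Rw: "width P R \<le> w" unfolding R_def Rof_def using chain_width[OF fin kinj fcw] .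
  have alt: "\<And>R'. poset_on P R' \<Longrightarrow> width P R' \<le> w \<Longrightarrow> (\<forall>(x,y,a)\<in>set h. answer_of R' x y = a)
      \<Longrightarrow> minimal_elements P R' = o'"
  proof -
    fix R' assume "poset_on P R'" "width P R' \<le> w" "\<forall>(x,y,a)\<in>set h. answer_of R' x y = a"
    with run_adv[OF adv this(3)] correct show "minimal_elements P R' = o'" by (metis fst_conv)
  qed
  have minR: "minimal_elements P R = o'" using alt[OF Rpos Rw HR] .
  have lemA: "\<And>x. x \<in> P \<Longrightarrow> x \<notin> up sf \<Longrightarrow> x \<in> minimal_elements P R"
  proof -
    fix x assume xP: "x \<in> P" and xu: "x \<notin> up sf"
    define k2 where "k2 v = (if v = x then 0 else Suc (?k v))" for v
    define R2 where "R2 = chainrel P ?f k2"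
    have k2inj: "inj_on k2 P" using kinj by (auto simp: inj_on_def k2_def)
    have R2pos: "poset_on P R2" unfolding R2_def by (rule chainrel_poset)
    have R2w: "width P R2 \<le> w" unfolding R2_def using chain_width[OF fin k2inj fcw] .
    have agree: "\<forall>(a,b,ans)\<in>set h. answer_of R2 a b = ans"
    proof (intro ballI, clarify)
      fix a b ans assume hab: "(a, b, ans) \<in> set h"
      have hh: "answer_of R a b = ans" "a \<noteq> b \<and> a \<in> P \<and> b \<in> P \<longrightarrow> (ans = Gt \<longrightarrow> a \<in> up sf) \<and> (ans = Lt \<longrightarrow> b \<in> up sf)"
        using H hab by auto
      show "answer_of R2 a b = ans"
      proof (cases "a \<noteq> b \<and> a \<in> P \<and> b \<in> P \<and> ?f a = ?f b")
        case False
        then have "\<not> R a b" "\<not> R b a" "\<not> R2 a b" "\<not> R2 b a"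
          by (auto simp: R_def Rof_def R2_def chainrel_def)
        then show ?thesis using hh(1) by (simp add: answer_of_def)
      next
        case True
        have kd: "?k a \<noteq> ?k b" using True kinj by (auto simp: inj_on_def)
        show ?thesis
        proof (cases "a = x \<or> b = x")
          case False
          then have "R2 a b = R a b" "R2 b a = R b a" using True
            by (auto simp: R_def Rof_def R2_def chainrel_def k2_def)
          then show ?thesis using hh(1) by (auto simp: answer_of_def split: if_splits)
        next
          case ax: True
          show ?thesis
          proof (cases "a = x")
            case True
            then have "b \<noteq> x" using \<open>a \<noteq> b \<and> a \<in> P \<and> b \<in> P \<and> ?f a = ?f b\<close> by auto
            have "ans \<noteq> Gt" using hh(2) True xu \<open>a \<noteq> b \<and> a \<in> P \<and> b \<in> P \<and> ?f a = ?f b\<close> by auto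
            then have "\<not> R a b" using hh(1) by (auto simp: answer_of_def)
            then have "?k a < ?k b" using kd True \<open>a \<noteq> b \<and> a \<in> P \<and> b \<in> P \<and> ?f a = ?f b\<close>
              by (auto simp: R_def Rof_def chainrel_def)
            then have "R b a" "\<not> R a b" "R2 b a" "\<not> R2 a b" using True \<open>b \<noteq> x\<close> \<open>\<not> R a b\<close> \<open>a \<noteq> b \<and> a \<in> P \<and> b \<in> P \<and> ?f a = ?f b\<close>
              by (auto simp: R_def Rof_def R2_def chainrel_def k2_def)
            then show ?thesis using hh(1) by (simp add: answer_of_def)
          next
            case False
            then have bx: "b = x" using ax by auto
            have "ans \<noteq> Lt" using hh(2) bx xu \<open>a \<noteq> b \<and> a \<in> P \<and> b \<in> P \<and> ?f a = ?f b\<close> by auto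
            then have "\<not> (\<not> R a b \<and> R b a)" using hh(1) by (auto simp: answer_of_def split: if_splits)
            then have "R a b"
              using kd \<open>a \<noteq> b \<and> a \<in> P \<and> b \<in> P \<and> ?f a = ?f b\<close> by (auto simp: R_def Rof_def chainrel_def)
            then have "R a b" "\<not> R b a" "R2 a b" "\<not> R2 b a" using bx False \<open>a \<noteq> b \<and> a \<in> P \<and> b \<in> P \<and> ?f a = ?f b\<close>
              by (auto simp: R_def Rof_def R2_def chainrel_def k2_def)
            then show ?thesis using hh(1) by (simp add: answer_of_def)
          qed
        qed
      qed
    qed
    have "minimal_elements P R2 = o'" using alt[OF R2pos R2w agree] .
    moreover have "x \<in> minimal_elements P R2"
      using xP by (auto simp: minimal_elements_def R2_def chainrel_def k2_def)
    ultimately show "x \<in> minimal_elements P R" using minR by simp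
  qed
  have nbc: "\<forall>x\<in>P. w - 1 \<le> card (nb sf x)"
  proof (rule ccontr)
    assume "\<not> (\<forall>x\<in>P. w - 1 \<le> card (nb sf x))"
    then obtain x where xP: "x \<in> P" and xc: "card (nb sf x) < w - 1" by (auto simp: not_le)
    have xun: "cl sf x = None"
    proof (rule ccontr)
      assume "cl sf x \<noteq> None"
      then obtain c where "cl sf x = Some c" by auto
      then have "w - 1 \<le> card (nb sf x)" using I(3) by blast
      then show False using xc by simp
    qed
    have xu: "x \<notin> up sf" using I(7) xun by auto
    have xmin: "x \<in> minimal_elements P R" using lemA[OF xP xu] .
    show False
    proof (cases "\<exists>c<w. c \<notin> used sf")
      case False
      have "?f x < w" using fcw xP by blast
      then have "?f x \<in> used sf" using False by blast
      then obtain y where y: "cl sf y = Some (?f x)" by (auto simp: used_def)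
      have yP: "y \<in> P" using I(3) y by blast
      have yx: "y \<noteq> x" using y xun by auto
      have fy: "?f y = ?f x" using G yP y by (simp add: goodcol_def)
      have "sp sf y < tm sf" using I(3) y by blast
      then have "?k y < ?k x" using y xun by (simp add: key_def)
      then have "R x y" using xP yP fy by (simp add: R_def Rof_def chainrel_def)
      then show False using xmin by (auto simp: minimal_elements_def)
    next
      case True
      then have upe: "up sf = {}" using I(8) by blast
      have allInc: "\<forall>(a,b,ans)\<in>set h. ans = Inc \<and> answer_of R a b = Inc"
      proof (intro ballI, clarify)
        fix a b ans assume hab: "(a, b, ans) \<in> set h"
        have hh: "answer_of R a b = ans" "a \<noteq> b \<and> a \<in> P \<and> b \<in> P \<longrightarrow> (ans = Gt \<longrightarrow> a \<in> up sf) \<and> (ans = Lt \<longrightarrow> b \<in> up sf)"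
          using H hab by auto
        show "ans = Inc \<and> answer_of R a b = Inc"
        proof (cases "a \<noteq> b \<and> a \<in> P \<and> b \<in> P")
          case True
          then have "ans \<noteq> Gt" "ans \<noteq> Lt" using hh(2) upe by auto
          then show ?thesis using hh(1) by (cases ans) auto
        next
          case False
          then have "\<not> R a b" "\<not> R b a" by (auto simp: R_def Rof_def chainrel_def)
          then show ?thesis using hh(1) by (simp add: answer_of_def)
        qed
      qed
      show False
      proof (cases "\<exists>a b. R a b")
        case True
        then obtain a b where ab: "R a b" by blast
        define Rop where "Rop = (\<lambda>u v. R v u)"
        note pR = Rpos[unfolded poset_on_def]
        have pR1: "\<forall>x y. R x y \<longrightarrow> x \<in> P \<and> y \<in> P" using pR by (rule conjunct1)
        have pR2: "\<forall>x\<in>P. \<not> R x x" using pR[THEN conjunct2] by (rule conjunct1)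
        have pR3: "\<forall>x y z. R x y \<longrightarrow> R y z \<longrightarrow> R x z" using pR[THEN conjunct2] by (rule conjunct2)
        have Roppos: "poset_on P Rop" unfolding poset_on_def Rop_def
        proof (intro conjI allI impI ballI)
          fix x y assume "R y x" then show "x \<in> P" "y \<in> P" using pR1 by auto
        next
          fix x assume "x \<in> P" then show "\<not> R x x" using pR2 by auto
        next
          fix x y z assume "R y x" "R z y" then show "R z x" using pR3 by metis
        qed
        have ac: "\<And>A. antichain_in P Rop A = antichain_in P R A" unfolding Rop_def by (rule antichain_conv)
        have "width P Rop = width P R" unfolding width_def by (simp only: ac)
        then have Ropw: "width P Rop \<le> w" using Rw by simp
        have agree: "\<forall>(a,b,ans)\<in>set h. answer_of Rop a b = ans"
        proof (intro ballI, clarify)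
          fix a b ans assume "(a, b, ans) \<in> set h"
          then have "ans = Inc" "answer_of R a b = Inc" using allInc by auto
          then have "\<not> R a b" "\<not> R b a" by (auto simp: answer_of_def split: if_splits)
          then show "answer_of Rop a b = ans" using \<open>ans = Inc\<close> by (simp add: answer_of_def Rop_def)
        qed
        have mop: "minimal_elements P Rop = o'" using alt[OF Roppos Ropw agree] .
        have bP: "b \<in> P" and aP: "a \<in> P" and fab: "?f a = ?f b" and kab: "?k b < ?k a"
          using ab by (auto simp: R_def Rof_def chainrel_def)
        define S where "S = {v \<in> P. ?f v = ?f b}"
        have Sfin: "finite S" using fin by (simp add: S_def)
        have bS: "b \<in> S" using bP by (simp add: S_def)
        obtain m where mS: "m \<in> S" and mmin: "\<forall>v\<in>S. ?k m \<le> ?k v"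
        proof -
          have "Min (?k ` S) \<in> ?k ` S" using Sfin bS by (intro Min_in) auto
          then obtain m where "m \<in> S" "?k m = Min (?k ` S)" by auto
          moreover have "\<forall>v\<in>S. Min (?k ` S) \<le> ?k v" using Sfin by auto
          ultimately show ?thesis using that by auto
        qed
        have "m \<in> minimal_elements P R"
        proof -
          have "\<not> R m v" for v
          proof
            assume "R m v"
            then have "v \<in> S" "?k v < ?k m" using mS by (auto simp: R_def Rof_def chainrel_def S_def)
            then show False using mmin by (meson leD)
          qed
          then show ?thesis using mS by (auto simp: minimal_elements_def S_def)
        qed
        moreover have "R a m" using mS mmin bS aP fab kab
          by (auto simp: R_def Rof_def chainrel_def S_def intro: le_less_trans)
        then have "m \<notin> minimal_elements P Rop" by (auto simp: minimal_elements_def Rop_def)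
        ultimately show False using mop minR by simp
      next
        case False
        then have noR: "\<And>a b. \<not> R a b" by blast
        have "antichain_in P R P" using noR by (simp add: antichain_in_def incomparable_def)
        then have "card P \<le> width P R" using card_le_width[OF fin] by blast
        then have Pw: "card P \<le> w" using Rw by simp
        have nbsub: "nb sf x \<subseteq> P - {x}" using I(1) by blast
        have "\<not> (P - {x} \<subseteq> nb sf x)"
        proof
          assume "P - {x} \<subseteq> nb sf x"
          then have "card (P - {x}) \<le> card (nb sf x)"
            using nbsub fin by (meson card_mono finite_Diff finite_subset)
          moreover have "card (P - {x}) = n - 1" using xP fin assms(2) by simp
          ultimately show False using xc assms(4) by linarith
        qed
        then obtain z where zP: "z \<in> P" and zx: "z \<noteq> x" and zn: "z \<notin> nb sf x" by auto
        define R3 where "R3 = (\<lambda>u v. u = x \<and> v = z)"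
        have R3pos: "poset_on P R3" using xP zP zx by (auto simp: poset_on_def R3_def)
        have R3w: "width P R3 \<le> w"
        proof (rule width_le[OF fin])
          fix A assume "antichain_in P R3 A"
          then have "A \<subseteq> P" by (simp add: antichain_in_def)
          then have "card A \<le> card P" using fin by (rule card_mono[rotated])
          then show "card A \<le> w" using Pw by simp
        qed
        have agree: "\<forall>(a,b,ans)\<in>set h. answer_of R3 a b = ans"
        proof (intro ballI, clarify)
          fix a b ans assume hab: "(a, b, ans) \<in> set h"
          have hh: "a \<noteq> b \<and> a \<in> P \<and> b \<in> P \<longrightarrow> (cl sf a = None \<longrightarrow> b \<in> nb sf a) \<and> (cl sf b = None \<longrightarrow> a \<in> nb sf b)"
            using H hab by auto
          have ai: "ans = Inc" using allInc hab by auto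
          have "\<not> (a = x \<and> b = z)" using hh xun zn zx xP zP by auto
          moreover have "\<not> (a = z \<and> b = x)" using hh xun zn zx xP zP by auto
          ultimately show "answer_of R3 a b = ans" using ai by (auto simp: answer_of_def R3_def)
        qed
        have "minimal_elements P R3 = o'" using alt[OF R3pos R3w agree] .
        moreover have "x \<notin> minimal_elements P R3" by (auto simp: minimal_elements_def R3_def)
        ultimately show False using xmin minR by simp
      qed
    qed
  qed
  have upP: "up sf \<subseteq> P"
  proof
    fix v assume "v \<in> up sf"
    then have "cl sf v \<noteq> None" using I(7) by auto
    then obtain c where "cl sf v = Some c" by auto
    then show "v \<in> P" using I(3) by blast
  qed
  have "P - minimal_elements P R \<subseteq> up sf" using lemA by blast
  then have c1: "card (P - minimal_elements P R) \<le> card (up sf)"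
    using upP fin by (meson card_mono finite_subset)
  have mP: "minimal_elements P R \<subseteq> P" by (auto simp: minimal_elements_def)
  have c2: "card (P - minimal_elements P R) = n - card (minimal_elements P R)"
    using mP fin assms(2) by (simp add: card_Diff_subset finite_subset)
  have c3: "card (minimal_elements P R) \<le> w" using min_card_le[OF fin Rw] .
  have s1: "n * (w - 1) \<le> (\<Sum>v\<in>P. card (nb sf v))"
  proof -
    have "(\<Sum>v\<in>P. w - 1) \<le> (\<Sum>v\<in>P. card (nb sf v))" using nbc by (intro sum_mono) auto
    then show ?thesis using assms(2) by simp
  qed
  have main: "n * (w - 1) + 2 * (n - w) \<le> 2 * length h"
  proof -
    have "n * (w - 1) + 2 * (n - w) \<le> (\<Sum>v\<in>P. card (nb sf v)) + 2 * card (up sf)"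
      using s1 c1 c2 c3 by linarith
    also have "\<dots> = pot P sf" by (simp add: pot_def)
    also have "\<dots> \<le> 2 * length h" using AI(2) pot0 by simp
    finally show ?thesis .
  qed
  have "real (n * (w - 1) + 2 * (n - w)) \<le> real (2 * length h)" using main by linarith
  then have "real n * (real w - 1) + 2 * (real n - real w) \<le> 2 * real (length h)"
    using assms(3,4) by (simp add: of_nat_diff)
  then have "(real w + 1) / 2 * real n - real w \<le> real (length h)"
    by (simp add: field_simps)
  then show ?thesis using Rpos Rw runR by auto
qed

end
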